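(* Let $\alpha>-1$, $M\ge0$, $N\ge0$. For $n=1,2,3,\ldots$ let $$L_n^{\alpha,M,N}(x)=A_0L_n^{(\alpha)}(x)+A_1\frac{d}{dx}L_n^{(\alpha)}(x)+A_2\frac{d^2}{dx^2}L_n^{(\alpha)}(x),$$ where $$A_0=1+M\binom{n+\alpha}{n-1}+\frac{n(\alpha+2)-(\alpha+1)}{(\alpha+1)(\alpha+3)}N\binom{n+\alpha}{n-2}+\frac{MN}{(\alpha+1)(\alpha+2)}\binom{n+\alpha}{n-1}\binom{n+\alpha+1}{n-2},$$ $$A_1=M\binom{n+\alpha}{n}+\frac{n-1}{\alpha+1}N\binom{n+\alpha}{n-1}+\frac{2MN}{(\alpha+1)^2}\binom{n+\alpha}{n}\binom{n+\alpha+1}{n-2},$$ $$A_2=\frac{N}{\alpha+1}\binom{n+\alpha}{n-1}+\frac{MN}{(\alpha+1)^2}\binom{n+\alpha}{n}\binom{n+\alpha+1}{n-1}.$$ Then for every $n\ge1$, $y=L_n^{\alpha,M,N}$ satisfies the (infinite order) differential equation $$\sum_{i=0}^{\infty}b_i^*(\alpha,x)y^{(i)}(x)+M\sum_{i=0}^{\infty}c_i^*(\alpha,x)y^{(i)}(x)=0,$$ where $b_i^*(\alpha,x)=\frac{1}{i!}\sum_{j=0}^i(-1)^j\binom{i}{j}(\alpha+1)_{i-j}x^j$ and $c_i^*(\alpha,x)=\frac{(-1)^i}{i!}x^i$ for $i=0,1,2,\ldots$.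
   Context: $L_n^{(\alpha)}(x)=\binom{n+\alpha}{n}\,{}_1F_1\!\left(\begin{matrix}-n\\ \alpha+1\end{matrix};x\right)=\sum_{k=0}^n\frac{(-n)_k}{(\alpha+1)_k}\binom{n+\alpha}{n}\frac{x^k}{k!}$ is the classical Laguerre polynomial; $(a)_k$ is the Pochhammer symbol and $\binom{\gamma}{m}$ the generalized binomial coefficient (zero when $m<0$). The polynomials $L_n^{\alpha,M,N}$ are orthogonal with respect to the Sobolev inner product $\langle f,g\rangle=\frac{1}{\Gamma(\alpha+1)}\int_0^\infty x^\alpha e^{-x}f(x)g(x)\,dx+Mf(0)g(0)+Nf'(0)g'(0)$. The infinite sums are finite when applied to polynomials. *)

theory Defs
  imports "HOL-Analysis.Analysis" "HOL-Computational_Algebra.Polynomial"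
begin

definition gbinom :: "real \<Rightarrow> int \<Rightarrow> real" where
  "gbinom g m = (if m < 0 then 0 else g gchoose (nat m))"

definition laguerre :: "nat \<Rightarrow> real \<Rightarrow> real poly" where
  "laguerre n a = (\<Sum>k\<le>n. monom (pochhammer (- real n) k / pochhammer (a + 1) k
        * gbinom (real n + a) (int n) / fact k) k)"

definition sobA0 :: "real \<Rightarrow> real \<Rightarrow> real \<Rightarrow> nat \<Rightarrow> real" where
  "sobA0 a M N n = 1 + M * gbinom (real n + a) (int n - 1)
     + (real n * (a + 2) - (a + 1)) / ((a + 1) * (a + 3)) * N * gbinom (real n + a) (int n - 2)
     + M * N / ((a + 1) * (a + 2)) * gbinom (real n + a) (int n - 1) * gbinom (real n + a + 1) (int n - 2)"

definition sobA1 :: "real \<Rightarrow> real \<Rightarrow> real \<Rightarrow> nat \<Rightarrow> real" where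
  "sobA1 a M N n = M * gbinom (real n + a) (int n)
     + (real n - 1) / (a + 1) * N * gbinom (real n + a) (int n - 1)
     + 2 * M * N / (a + 1)^2 * gbinom (real n + a) (int n) * gbinom (real n + a + 1) (int n - 2)"

definition sobA2 :: "real \<Rightarrow> real \<Rightarrow> real \<Rightarrow> nat \<Rightarrow> real" where
  "sobA2 a M N n = N / (a + 1) * gbinom (real n + a) (int n - 1)
     + M * N / (a + 1)^2 * gbinom (real n + a) (int n) * gbinom (real n + a + 1) (int n - 1)"

definition sob_laguerre :: "real \<Rightarrow> real \<Rightarrow> real \<Rightarrow> nat \<Rightarrow> real poly" where
  "sob_laguerre a M N n =
     smult (sobA0 a M N n) (laguerre n a)
     + smult (sobA1 a M N n) (pderiv (laguerre n a))
     + smult (sobA2 a M N n) (pderiv (pderiv (laguerre n a)))"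

definition bstar :: "nat \<Rightarrow> real \<Rightarrow> real \<Rightarrow> real" where
  "bstar i a x = 1 / fact i * (\<Sum>j\<le>i. (-1)^j * real (i choose j) * pochhammer (a + 1) (i - j) * x^j)"

definition cstar :: "nat \<Rightarrow> real \<Rightarrow> real" where
  "cstar i x = (-1)^i / fact i * x^i"

end

theory Submission
  imports Defs
begin

lemma higher_pderiv_zero_deg:
  fixes p :: "real poly"
  assumes "i > degree p" shows "(pderiv ^^ i) p = 0"
proof -
  have "degree ((pderiv ^^ i) p) = 0" using assms by (simp add: degree_higher_pderiv)
  moreover have "coeff ((pderiv ^^ i) p) 0 = 0"
    using assms by (simp add: coeff_higher_pderiv coeff_eq_0)
  ultimately show ?thesis by (metis leading_coeff_0_iff)
qed

lemma taylor0:
  fixes p :: "real poly"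
  assumes "degree p \<le> K"
  shows "(\<Sum>j\<le>K. (-x)^j / fact j * poly ((pderiv ^^ j) p) x) = poly p 0"
proof -
  define diff where "diff m = (\<lambda>h. poly ((pderiv ^^ m) p) (x + h))" for m
  have D: "\<forall>m h. DERIV (diff m) h :> diff (Suc m) h"
  proof (intro allI)
    fix m h
    show "DERIV (diff m) h :> diff (Suc m) h"
    proof -
      have "((\<lambda>h. x + h) has_real_derivative 1) (at h)" by (auto intro!: derivative_eq_intros)
      from DERIV_chain2[OF poly_DERIV this, of "(pderiv ^^ m) p"]
      show ?thesis unfolding diff_def by simp
    qed
  qed
  obtain t where t: "diff 0 (-x) = (\<Sum>m<Suc K. (diff m 0 / fact m) * (-x) ^ m) + (diff (Suc K) t / fact (Suc K)) * (-x) ^ (Suc K)"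
    using Maclaurin_all_le[of diff "diff 0", OF refl D, of "-x" "Suc K"] by blast
  have "diff (Suc K) t = 0" unfolding diff_def using assms
    by (simp only: higher_pderiv_zero_deg[of p "Suc K"]) simp
  with t have "poly p 0 = (\<Sum>m<Suc K. (diff m 0 / fact m) * (-x) ^ m)" by (simp add: diff_def)
  also have "\<dots> = (\<Sum>j\<le>K. (-x)^j / fact j * poly ((pderiv ^^ j) p) x)"
    by (simp add: lessThan_Suc_atMost diff_def mult_ac)
  finally show ?thesis ..
qed

lemma aux_field:
  fixes fi fj fk s P y c :: real
  assumes "fi \<noteq> 0" "fj \<noteq> 0" "fk \<noteq> 0"
  shows "1 / fi * (s * (fi / (fj * fk)) * P * y) * c = s * y / fj * (P / fk) * c"
  using assms by (simp add: field_simps)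

lemma bstar_expand:
  "bstar i a x * c = (\<Sum>j\<le>i. (-x)^j / fact j * (pochhammer (a+1) (i-j) / fact (i-j)) * c)"
proof -
  have "bstar i a x * c = (\<Sum>j\<le>i. 1 / fact i * ((-1)^j * real (i choose j) * pochhammer (a + 1) (i - j) * x^j) * c)"
    unfolding bstar_def sum_distrib_left sum_distrib_right ..
  also have "\<dots> = (\<Sum>j\<le>i. (-x)^j / fact j * (pochhammer (a+1) (i-j) / fact (i-j)) * c)"
  proof (rule sum.cong[OF refl])
    fix j assume "j \<in> {..i}"
    then have "j \<le> i" by simp
    then have C: "real (i choose j) = fact i / (fact j * fact (i - j))" by (rule binomial_fact)
    have M: "(-x)^j = (-1)^j * x^j" by (rule power_minus)
    show "1 / fact i * ((-1)^j * real (i choose j) * pochhammer (a + 1) (i - j) * x^j) * c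
       = (-x)^j / fact j * (pochhammer (a+1) (i-j) / fact (i-j)) * c"
      unfolding C M by (rule aux_field) auto
  qed
  finally show ?thesis .
qed

lemma bsum:
  fixes p :: "real poly"
  assumes "degree p \<le> K"
  shows "(\<Sum>i\<le>K. bstar i a x * poly ((pderiv ^^ i) p) x) = (\<Sum>m\<le>K. pochhammer (a+1) m * coeff p m)"
proof -
  define f where "f j m = (-x)^j / fact j * (pochhammer (a+1) m / fact m) * poly ((pderiv ^^ j) ((pderiv ^^ m) p)) x" for j m
  have "(\<Sum>i\<le>K. bstar i a x * poly ((pderiv ^^ i) p) x) = (\<Sum>i\<le>K. \<Sum>j\<le>i. f j (i - j))"
  proof (rule sum.cong[OF refl])
    fix i assume "i \<in> {..K}"
    show "bstar i a x * poly ((pderiv ^^ i) p) x = (\<Sum>j\<le>i. f j (i - j))"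
      unfolding bstar_expand f_def
    proof (rule sum.cong[OF refl])
      fix j assume "j \<in> {..i}"
      have "(pderiv ^^ (j + (i-j))) p = (pderiv ^^ j) ((pderiv ^^ (i - j)) p)"
        by (simp only: funpow_add o_apply)
      with \<open>j \<in> {..i}\<close> have "(pderiv ^^ j) ((pderiv ^^ (i - j)) p) = (pderiv ^^ i) p"
        by simp
      then show "(-x)^j / fact j * (pochhammer (a+1) (i-j) / fact (i-j)) * poly ((pderiv ^^ i) p) x =
         (-x)^j / fact j * (pochhammer (a+1) (i-j) / fact (i-j)) * poly ((pderiv ^^ j) ((pderiv ^^ (i - j)) p)) x"
        by simp
    qed
  qed
  also have "\<dots> = (\<Sum>(j,m)\<in>{(j,m). j+m \<le> K}. f j m)"
    by (rule sum.triangle_reindex_eq[symmetric])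
  also have "\<dots> = (\<Sum>(m,j)\<in>{(m,j). m+j \<le> K}. f j m)"
    by (rule sum.reindex_bij_witness[where i="\<lambda>(a,b). (b,a)" and j="\<lambda>(a,b). (b,a)"]) auto
  also have "{(m,j). m+j \<le> K} = Sigma {..K} (\<lambda>m. {..K-m})" by auto
  also have "(\<Sum>(m,j)\<in>Sigma {..K} (\<lambda>m. {..K-m}). f j m) = (\<Sum>m\<le>K. \<Sum>j\<le>K-m. f j m)"
    by (rule sum.Sigma[symmetric]) auto
  also have "\<dots> = (\<Sum>m\<le>K. pochhammer (a+1) m * coeff p m)"
  proof (rule sum.cong[OF refl])
    fix m assume "m \<in> {..K}"
    have deg: "degree ((pderiv ^^ m) p) \<le> K - m" using assms by (simp add: degree_higher_pderiv)
    have "(\<Sum>j\<le>K-m. f j m) = pochhammer (a+1) m / fact m * (\<Sum>j\<le>K-m. (-x)^j / fact j * poly ((pderiv ^^ j) ((pderiv ^^ m) p)) x)"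
      unfolding f_def sum_distrib_left by (rule sum.cong) (auto simp: mult_ac)
    also have "\<dots> = pochhammer (a+1) m / fact m * poly ((pderiv ^^ m) p) 0"
      by (simp only: taylor0[OF deg])
    also have "poly ((pderiv ^^ m) p) 0 = fact m * coeff p m"
      by (simp add: poly_0_coeff_0 coeff_higher_pderiv pochhammer_fact)
    finally show "(\<Sum>j\<le>K-m. f j m) = pochhammer (a+1) m * coeff p m" by simp
  qed
  finally show ?thesis .
qed

lemma csum:
  fixes p :: "real poly"
  assumes "degree p \<le> K"
  shows "(\<Sum>i\<le>K. cstar i x * poly ((pderiv ^^ i) p) x) = poly p 0"
proof -
  have "(\<Sum>i\<le>K. cstar i x * poly ((pderiv ^^ i) p) x) = (\<Sum>j\<le>K. (-x)^j / fact j * poly ((pderiv ^^ j) p) x)"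
    unfolding cstar_def by (rule sum.cong[OF refl]) (simp add: power_minus[of x])
  then show ?thesis using taylor0[OF assms, of x] by simp
qed

lemma CV_alg:
  fixes b c X P Q :: real and n :: nat
  assumes "c > 0" "P > 0" "Q > 0" "c * Q = (c + n) * P"
  shows "X / P - b / c * (X / Q) = (c - b + n) * X / (c * Q)"
proof -
  have cn: "c + n > 0" using assms by simp
  have "b / c * (X / Q) = b * X / (c * Q)" by simp
  also have "\<dots> = b * X / ((c + n) * P)" using assms by simp
  finally have 1: "b / c * (X / Q) = b * X / ((c + n) * P)" .
  have 2: "X / P = (c + n) * X / ((c + n) * P)" using cn by simp
  have "X / P - b / c * (X / Q) = ((c + n) * X - b * X) / ((c + n) * P)"
    unfolding 1 2 by (simp add: diff_divide_distrib)
  also have "(c + n) * X - b * X = (c - b + n) * X" by (simp add: algebra_simps)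
  finally show ?thesis using assms by simp
qed

lemma CV:
  fixes b c :: real
  assumes "c > 0"
  shows "(\<Sum>k\<le>n. (-1)^k * real (n choose k) * pochhammer b k / pochhammer c k)
         = pochhammer (c - b) n / pochhammer c n"
  using assms
proof (induction n arbitrary: b c)
  case 0
  then show ?case by simp
next
  case (Suc n)
  define F where "F k = pochhammer b k / pochhammer c k" for k
  define G where "G k = pochhammer (b+1) k / pochhammer (c+1) k" for k
  have FG: "F (Suc k) = b / c * G k" for k
    unfolding F_def G_def by (simp add: pochhammer_rec)
  have R: "c * pochhammer (c+1) n = (c + n) * pochhammer c n"
    using pochhammer_rec[of c n] pochhammer_rec'[of c n] by simp
  have IH1: "(\<Sum>k\<le>n. (-1)^k * real (n choose k) * F k) = pochhammer (c - b) n / pochhammer c n"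
    using Suc.IH[of c b] Suc.prems unfolding F_def by (simp add: mult.assoc)
  have IH2: "(\<Sum>k\<le>n. (-1)^k * real (n choose k) * G k) = pochhammer (c - b) n / pochhammer (c+1) n"
    using Suc.IH[of "c+1" "b+1"] Suc.prems unfolding G_def by (simp add: mult.assoc)
  have A: "(\<Sum>k\<le>n. (-1)^k * real (n choose k) * F k)
      = 1 + (\<Sum>k\<le>n. (-1)^(Suc k) * real (n choose Suc k) * F (Suc k))"
  proof -
    have "(\<Sum>k\<le>n. (-1)^k * real (n choose k) * F k) = (\<Sum>k\<le>Suc n. (-1)^k * real (n choose k) * F k)"
      by simp
    also have "\<dots> = 1 + (\<Sum>k\<le>n. (-1)^(Suc k) * real (n choose Suc k) * F (Suc k))"
      by (subst sum.atMost_Suc_shift) (simp add: F_def)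
    finally show ?thesis .
  qed
  have "(\<Sum>k\<le>Suc n. (-1)^k * real (Suc n choose k) * F k)
      = 1 + (\<Sum>k\<le>n. (-1)^(Suc k) * real (Suc n choose Suc k) * F (Suc k))"
    by (subst sum.atMost_Suc_shift) (simp add: F_def)
  also have "\<dots> = 1 + (\<Sum>k\<le>n. (-1)^(Suc k) * real (n choose Suc k) * F (Suc k))
                     - b / c * (\<Sum>k\<le>n. (-1)^k * real (n choose k) * G k)"
  proof -
    have "(-1)^(Suc k) * real (Suc n choose Suc k) * F (Suc k) =
          (-1)^(Suc k) * real (n choose Suc k) * F (Suc k) - b / c * ((-1)^k * real (n choose k) * G k)" for k
      by (simp add: FG algebra_simps)
    then show ?thesis by (simp add: sum_subtractf sum_distrib_left)
  qed
  also have "\<dots> = pochhammer (c - b) n / pochhammer c n - b / c * (pochhammer (c - b) n / pochhammer (c+1) n)"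
    using A IH1 IH2 by simp
  also have "\<dots> = (c - b + n) * pochhammer (c - b) n / (c * pochhammer (c+1) n)"
    by (rule CV_alg) (use Suc.prems R in \<open>auto intro: pochhammer_pos\<close>)
  also have "\<dots> = pochhammer (c - b) (Suc n) / pochhammer c (Suc n)"
    using pochhammer_rec[of c n] pochhammer_rec'[of "c - b" n] by (simp add: add_ac)
  finally show ?case unfolding F_def by (simp add: mult.assoc)
qed

lemma poch_neg_nat: "pochhammer (- real n) k / fact k = (-1)^k * real (n choose k)"
proof -
  have "real (n choose k) = real n gchoose k" by (rule binomial_gbinomial)
  then have "real (n choose k) = (-1)^k * pochhammer (- real n) k / fact k"
    using gbinomial_pochhammer[of "real n" k] by simp
  then have "(-1)^k * real (n choose k) = ((-1)^k * (-1)^k) * pochhammer (- real n) k / fact k"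
    by simp
  also have "(-1::real)^k * (-1)^k = 1" by (simp add: power_mult_distrib[symmetric])
  finally show ?thesis by simp
qed

lemma coeff_lag:
  "coeff (laguerre n a) k = (-1)^k * real (n choose k) * gbinom (real n + a) (int n) / pochhammer (a+1) k"
proof -
  have "coeff (laguerre n a) k = (\<Sum>j\<le>n. if j = k then pochhammer (- real n) j / pochhammer (a + 1) j
        * gbinom (real n + a) (int n) / fact j else 0)"
    unfolding laguerre_def coeff_sum coeff_monom by (rule sum.cong) auto
  also have "\<dots> = (if k \<le> n then pochhammer (- real n) k / pochhammer (a + 1) k
        * gbinom (real n + a) (int n) / fact k else 0)"
    by (simp add: sum.delta)
  also have "\<dots> = (-1)^k * real (n choose k) * gbinom (real n + a) (int n) / pochhammer (a+1) k"
  proof (cases "k \<le> n")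
    case True
    have "pochhammer (- real n) k / pochhammer (a + 1) k * gbinom (real n + a) (int n) / fact k
        = (pochhammer (- real n) k / fact k) * gbinom (real n + a) (int n) / pochhammer (a + 1) k"
      by simp
    then show ?thesis using True by (simp only: poch_neg_nat if_True)
  qed simp
  finally show ?thesis .
qed

lemma degree_lag: "degree (laguerre n a) \<le> n"
  unfolding laguerre_def
  by (rule degree_sum_le) (auto intro: order.trans[OF degree_monom_le])

lemma degree_sob: "degree (sob_laguerre a M N n) \<le> n"
  unfolding sob_laguerre_def
  using degree_lag[of n a]
  by (intro degree_add_le order.trans[OF degree_smult_le]) (auto simp: degree_pderiv)

lemma gbinom_nat: "gbinom g (int k) = g gchoose k"
  by (simp add: gbinom_def)

lemma B_val: "gbinom (real n + a) (int n) = pochhammer (a+1) n / fact n"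
  by (simp add: gbinom_nat gbinomial_pochhammer' add_ac)

lemma T0:
  assumes "a > -1" "n \<ge> 1"
  shows "(\<Sum>m\<le>n. pochhammer (a+1) m * coeff (laguerre n a) m) = 0"
proof -
  let ?B = "gbinom (real n + a) (int n)"
  have "(\<Sum>m\<le>n. pochhammer (a+1) m * coeff (laguerre n a) m) = (\<Sum>m\<le>n. ?B * ((-1)^m * real (n choose m)))"
  proof (rule sum.cong[OF refl])
    fix m
    have "pochhammer (a+1) m > 0" using assms by (intro pochhammer_pos) simp
    then show "pochhammer (a+1) m * coeff (laguerre n a) m = ?B * ((-1)^m * real (n choose m))"
      unfolding coeff_lag by (simp add: field_simps)
  qed
  also have "\<dots> = ?B * (\<Sum>m\<le>n. (-1)^m * real (n choose m))" by (simp add: sum_distrib_left)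
  also have "\<dots> = 0" using assms choose_alternating_sum[of n, where 'a=real] by simp
  finally show ?thesis .
qed

lemma aux_m1:
  fixes u v w z :: real
  shows "u \<noteq> 0 \<Longrightarrow> v \<noteq> 0 \<Longrightarrow> w \<noteq> 0 \<Longrightarrow> z \<noteq> 0 \<Longrightarrow> - (v * (u * z / (v * w)) / u) * (w / z) = -1"
  by (simp add: field_simps)

lemma T1:
  assumes "a > -1" "n \<ge> 1"
  shows "(\<Sum>m\<le>n. pochhammer (a+1) m * coeff (pderiv (laguerre n a)) m) = -1"
proof -
  obtain l where n: "n = Suc l" using assms by (cases n) auto
  let ?B = "gbinom (real n + a) (int n)"
  define g where "g m = (-1)^m * real (l choose m) * pochhammer (a+1) m / pochhammer (a+2) m" for m
  have "(\<Sum>m\<le>n. pochhammer (a+1) m * coeff (pderiv (laguerre n a)) m) = (\<Sum>m\<le>Suc l. - (real n * ?B / (a+1)) * g m)"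
  proof (rule sum.cong)
    fix m
    have p: "pochhammer (a+2) m > 0" using assms by (intro pochhammer_pos) simp
    have a1: "a + 1 > 0" using assms by simp
    have ch: "real (Suc m) * real (n choose Suc m) = real n * real (l choose m)"
      using Suc_times_binomial[of m l] unfolding n by (simp only: of_nat_mult[symmetric] mult.commute)
    have pr: "pochhammer (a+1) (Suc m) = (a+1) * pochhammer (a+2) m"
      by (simp add: pochhammer_rec add_ac)
    have "pochhammer (a+1) m * coeff (pderiv (laguerre n a)) m
        = pochhammer (a+1) m * (- (real (Suc m) * real (n choose Suc m)) * (-1)^m * ?B / ((a+1) * pochhammer (a+2) m))"
      unfolding coeff_pderiv coeff_lag pr by simp
    also have "\<dots> = - (real n * ?B / (a+1)) * g m"
      unfolding ch g_def using p a1 by (simp add: field_simps)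
    finally show "pochhammer (a+1) m * coeff (pderiv (laguerre n a)) m = - (real n * ?B / (a+1)) * g m" .
  qed (simp add: n)
  also have "\<dots> = - (real n * ?B / (a+1)) * (\<Sum>m\<le>l. g m)"
    by (simp add: sum_distrib_left g_def)
  also have "(\<Sum>m\<le>l. g m) = pochhammer 1 l / pochhammer (a+2) l"
    unfolding g_def using CV[of "a+2" l "a+1"] assms by simp
  also have "?B = (a+1) * pochhammer (a+2) l / (real n * fact l)"
    unfolding B_val n by (simp add: pochhammer_rec add_ac)
  also have "pochhammer 1 l = (fact l :: real)" by (simp add: pochhammer_fact)
  finally have X: "(\<Sum>m\<le>n. pochhammer (a+1) m * coeff (pderiv (laguerre n a)) m) =
     - (real n * ((a + 1) * pochhammer (a + 2) l / (real n * fact l)) / (a + 1)) * (fact l / pochhammer (a + 2) l)" .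
  have nz: "a + 1 \<noteq> 0" "real n \<noteq> 0" "(fact l::real) \<noteq> 0" "pochhammer (a+2) l \<noteq> 0"
    using assms pochhammer_pos[of "a+2" l] by auto
  show ?thesis unfolding X using nz by (rule aux_m1)
qed

lemma aux_m2:
  fixes u v w z k :: real
  shows "u \<noteq> 0 \<Longrightarrow> v \<noteq> 0 \<Longrightarrow> w \<noteq> 0 \<Longrightarrow> z \<noteq> 0 \<Longrightarrow>
    (v * k * (u * z / (v * w)) / u) * (w / z) = k"
  by (simp add: field_simps)

lemma T2:
  assumes "a > -1" "n \<ge> 1"
  shows "(\<Sum>m\<le>n. pochhammer (a+1) m * coeff (pderiv (pderiv (laguerre n a))) m) = real n - 1"
proof (cases "n = 1")
  case True
  have "coeff (pderiv (pderiv (laguerre n a))) m = 0" for m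
    unfolding coeff_pderiv coeff_lag True by simp
  then show ?thesis using True by simp
next
  case False
  then obtain r where n: "n = Suc (Suc r)" using assms by (cases n; cases "n - 1") auto
  let ?B = "gbinom (real n + a) (int n)"
  define g where "g m = (-1)^m * real (r choose m) * pochhammer (a+1) m / pochhammer (a+3) m" for m
  define K where "K = real n * real (Suc r) * ?B / ((a+1) * (a+2))"
  have "(\<Sum>m\<le>n. pochhammer (a+1) m * coeff (pderiv (pderiv (laguerre n a))) m) = (\<Sum>m\<le>Suc (Suc r). K * g m)"
  proof (rule sum.cong)
    fix m
    have p: "pochhammer (a+3) m > 0" using assms by (intro pochhammer_pos) simp
    have a1: "a + 1 > 0" "a + 2 > 0" using assms by simp_all
    have ch1: "real (Suc (Suc m)) * real (n choose Suc (Suc m)) = real n * real (Suc r choose Suc m)"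
      using Suc_times_binomial[of "Suc m" "Suc r"] unfolding n by (simp only: of_nat_mult[symmetric] mult.commute)
    have ch2: "real (Suc m) * real (Suc r choose Suc m) = real (Suc r) * real (r choose m)"
      using Suc_times_binomial[of m r] by (simp only: of_nat_mult[symmetric] mult.commute)
    have ch: "real (Suc m) * (real (Suc (Suc m)) * real (n choose Suc (Suc m))) = real n * real (Suc r) * real (r choose m)"
      by (metis ch1 ch2 mult.left_commute mult.assoc)
    have pr: "pochhammer (a+1) (Suc (Suc m)) = (a+1) * (a+2) * pochhammer (a+3) m"
      by (simp add: pochhammer_rec add_ac)
    have "pochhammer (a+1) m * coeff (pderiv (pderiv (laguerre n a))) m
        = pochhammer (a+1) m * ((real (Suc m) * (real (Suc (Suc m)) * real (n choose Suc (Suc m)))) * (-1)^m * ?B / ((a+1) * (a+2) * pochhammer (a+3) m))"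
      unfolding coeff_pderiv coeff_lag pr by (simp add: mult_ac)
    also have "\<dots> = K * g m"
      unfolding ch g_def K_def using p a1 by (simp add: field_simps)
    finally show "pochhammer (a+1) m * coeff (pderiv (pderiv (laguerre n a))) m = K * g m" .
  qed (simp add: n)
  also have "\<dots> = K * (\<Sum>m\<le>r. g m)"
    by (simp add: sum_distrib_left g_def binomial_eq_0)
  also have "(\<Sum>m\<le>r. g m) = pochhammer 2 r / pochhammer (a+3) r"
    unfolding g_def using CV[of "a+3" r "a+1"] assms by simp
  also have "pochhammer 2 r = (fact (Suc r) :: real)"
    by (simp add: pochhammer_fact pochhammer_rec)
  finally have X0: "(\<Sum>m\<le>n. pochhammer (a+1) m * coeff (pderiv (pderiv (laguerre n a))) m) =
     K * (fact (Suc r) / pochhammer (a + 3) r)" .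
  have Bv: "?B = (a+1) * (a+2) * pochhammer (a+3) r / (real n * fact (Suc r))"
    unfolding B_val n by (simp add: pochhammer_rec add_ac)
  have X: "(\<Sum>m\<le>n. pochhammer (a+1) m * coeff (pderiv (pderiv (laguerre n a))) m) =
     (real n * real (Suc r) * ((a+1) * (a+2) * pochhammer (a+3) r / (real n * fact (Suc r))) / ((a+1) * (a+2))) *
     (fact (Suc r) / pochhammer (a+3) r)"
    unfolding X0 K_def Bv ..
  have nz: "(a + 1) * (a+2) \<noteq> 0" "real n \<noteq> 0" "(fact (Suc r)::real) \<noteq> 0" "pochhammer (a+3) r \<noteq> 0"
    using assms pochhammer_pos[of "a+3" r] by auto
  have "real n - 1 = real (Suc r)" using n by simp
  then show ?thesis unfolding X using aux_m2[OF nz, of "real (Suc r)"] by simp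
qed

lemma gch: "(real k + y) gchoose k = pochhammer (y + 1) k / fact k"
  by (simp add: gbinomial_pochhammer')

lemma final_identity:
  assumes "a > -1" "n \<ge> 1"
  shows "- sobA1 a M N n + sobA2 a M N n * (real n - 1)
    + M * (sobA0 a M N n * gbinom (real n + a) (int n)
           + sobA1 a M N n * coeff (laguerre n a) 1
           + sobA2 a M N n * (2 * coeff (laguerre n a) 2)) = 0"
proof (cases "n = 1")
  case True
  have a1: "a + 1 \<noteq> 0" using assms by simp
  have g1: "gbinom (1 + a) 1 = 1 + a" by (simp add: gbinom_def)
  have g0: "gbinom (1 + a) 0 = 1" "gbinom (2 + a) 0 = 1" by (simp_all add: gbinom_def)
  have gm: "gbinom g (-1) = 0" for g by (simp add: gbinom_def)
  show ?thesis
    unfolding True sobA0_def sobA1_def sobA2_def coeff_lag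
    using a1 by (simp add: g1 g0 gm add_ac field_simps power2_eq_square binomial_eq_0)
next
  case False
  then obtain r where n: "n = Suc (Suc r)" using assms by (cases n; cases "n - 1") auto
  define P where "P = pochhammer (a+3) r"
  define f where "f = (fact r :: real)"
  define G where "G = P / f"
  have Ppos: "P > 0" unfolding P_def using assms by (intro pochhammer_pos) simp
  have fpos: "f > 0" unfolding f_def by simp
  have a1: "a + 1 > 0" "a + 2 > 0" "a + 3 > 0" using assms by simp_all
  have P4: "pochhammer (a+4) r = (a + 3 + r) * P / (a + 3)"
  proof -
    have "(a+3) * pochhammer (a+4) r = (a + 3 + r) * P"
      using pochhammer_rec[of "a+3" r] pochhammer_rec'[of "a+3" r] unfolding P_def by (simp add: add_ac)
    then show ?thesis using a1 by (simp add: field_simps)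
  qed
  have e1: "int n - 1 = int (Suc r)" "int n - 2 = int r" using n by simp_all
  have r1: "real n + a = real (Suc (Suc r)) + a" "real n + a + 1 = real (Suc (Suc r)) + (a + 1)" using n by simp_all
  have gB: "gbinom (real n + a) (int n) = (a+1) * (a+2) * G / ((real r + 2) * (real r + 1))"
    unfolding B_val n G_def P_def f_def by (simp add: pochhammer_rec add_ac) (simp add: algebra_simps)
  have g1: "gbinom (real n + a) (int n - 1) = (a+2) * G / (real r + 1)"
  proof -
    have "real n + a = real (Suc r) + (a + 1)" using n by simp
    note eq = this
    show ?thesis unfolding e1 gbinom_nat eq G_def P_def f_def gch
      by (simp add: pochhammer_rec add_ac)
  qed
  have g2: "gbinom (real n + a) (int n - 2) = G"
  proof -
    have "real n + a = real r + (a + 2)" using n by simp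
    note eq = this
    show ?thesis unfolding e1 gbinom_nat eq G_def P_def f_def gch
      by (simp add: add_ac)
  qed
  have h1: "gbinom (real n + a + 1) (int n - 1) = (a + 3 + real r) * G / (real r + 1)"
  proof -
    have "real n + a + 1 = real (Suc r) + (a + 2)" using n by simp
    note eq = this
    show ?thesis unfolding e1 gbinom_nat eq G_def P_def f_def gch
      by (simp add: pochhammer_rec' add_ac)
  qed
  have h2: "gbinom (real n + a + 1) (int n - 2) = (a + 3 + real r) * G / (a + 3)"
  proof -
    have "real n + a + 1 = real r + (a + 3)" using n by simp
    note eq = this
    have a4: "a + 3 + 1 = a + 4" by simp
    show ?thesis unfolding e1 gbinom_nat eq G_def f_def gch a4 P4
      using a1 by (simp add: field_simps)
  qed
  have c1: "coeff (laguerre n a) 1 = - real n * gbinom (real n + a) (int n) / (a + 1)"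
    unfolding coeff_lag by simp
  have ch2: "2 * real (n choose 2) = real n * (real n - 1)"
  proof -
    have "Suc 1 * (Suc (Suc r) choose Suc 1) = Suc (Suc r) * (Suc r choose 1)"
      by (rule Suc_times_binomial)
    then have "2 * (n choose 2) = n * Suc r" unfolding n by (simp add: choose_one numeral_2_eq_2)
    then have "real (2 * (n choose 2)) = real (n * Suc r)" by (simp only:)
    then show ?thesis using n by (simp add: algebra_simps)
  qed
  have c2: "2 * coeff (laguerre n a) 2 = real n * (real n - 1) * gbinom (real n + a) (int n) / ((a + 1) * (a + 2))"
  proof -
    have "pochhammer (a+1) 2 = (a+1) * (a+2)" by (simp add: numeral_2_eq_2 pochhammer_rec add_ac)
    note pq = this
    have "2 * coeff (laguerre n a) 2 = (2 * real (n choose 2)) * gbinom (real n + a) (int n) / ((a + 1) * (a + 2))"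
      unfolding coeff_lag pq by simp
    then show ?thesis unfolding ch2 .
  qed
  have rn: "real n = real r + 2" using n by simp
  define p1 where "p1 = a + 1"
  define p2 where "p2 = a + 2"
  define p3 where "p3 = a + 3"
  define q1 where "q1 = real r + 1"
  define q2 where "q2 = real r + 2"
  have nz: "p1 \<noteq> 0" "p2 \<noteq> 0" "p3 \<noteq> 0" "q1 \<noteq> 0" "q2 \<noteq> 0"
    using a1 unfolding p1_def p2_def p3_def q1_def q2_def by auto
  have eqs: "p2 = p1 + 1" "p3 = p1 + 2" "q2 = q1 + 1"
    unfolding p1_def p2_def p3_def q1_def q2_def by simp_all
  have req: "real r = q1 - 1" unfolding q1_def by simp
  show ?thesis
    unfolding sobA0_def sobA1_def sobA2_def c1 c2 g1 g2 h1 h2 gB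
    unfolding rn
    unfolding p1_def[symmetric] p2_def[symmetric] p3_def[symmetric] q1_def[symmetric] q2_def[symmetric]
    unfolding req
    using nz apply (simp add: field_simps power2_eq_square)
    unfolding eqs by algebra
qed

lemma T_sob:
  assumes "a > -1" "n \<ge> 1"
  shows "(\<Sum>m\<le>n. pochhammer (a+1) m * coeff (sob_laguerre a M N n) m)
     = - sobA1 a M N n + sobA2 a M N n * (real n - 1)"
proof -
  let ?L = "laguerre n a"
  have "(\<Sum>m\<le>n. pochhammer (a+1) m * coeff (sob_laguerre a M N n) m)
     = sobA0 a M N n * (\<Sum>m\<le>n. pochhammer (a+1) m * coeff ?L m)
     + sobA1 a M N n * (\<Sum>m\<le>n. pochhammer (a+1) m * coeff (pderiv ?L) m)
     + sobA2 a M N n * (\<Sum>m\<le>n. pochhammer (a+1) m * coeff (pderiv (pderiv ?L)) m)"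
    unfolding sob_laguerre_def coeff_add coeff_smult
    by (simp add: sum.distrib sum_distrib_left algebra_simps)
  then show ?thesis using T0[OF assms] T1[OF assms] T2[OF assms] by simp
qed

lemma Y0:
  "poly (sob_laguerre a M N n) 0 = sobA0 a M N n * gbinom (real n + a) (int n)
           + sobA1 a M N n * coeff (laguerre n a) 1
           + sobA2 a M N n * (2 * coeff (laguerre n a) 2)"
proof -
  have "coeff (laguerre n a) 0 = gbinom (real n + a) (int n)" unfolding coeff_lag by simp
  then show ?thesis
    unfolding sob_laguerre_def poly_0_coeff_0 coeff_add coeff_smult coeff_pderiv
    by (simp add: numeral_2_eq_2)
qed

theorem mainTheorem3:
  fixes a M N :: real and n :: nat
  assumes "a > -1" and "M \<ge> 0" and "N \<ge> 0" and "n \<ge> 1"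
  shows "\<forall>x::real.
    (\<Sum>i. bstar i a x * poly ((pderiv ^^ i) (sob_laguerre a M N n)) x)
    + M * (\<Sum>i. cstar i x * poly ((pderiv ^^ i) (sob_laguerre a M N n)) x) = 0"
proof
  fix x :: real
  let ?y = "sob_laguerre a M N n"
  have deg: "degree ?y \<le> n" by (rule degree_sob)
  have z: "(pderiv ^^ i) ?y = 0" if "i \<notin> {..n}" for i
    using that deg by (intro higher_pderiv_zero_deg) auto
  have S1: "(\<Sum>i. bstar i a x * poly ((pderiv ^^ i) ?y) x) = (\<Sum>i\<le>n. bstar i a x * poly ((pderiv ^^ i) ?y) x)"
    by (rule suminf_finite) (auto simp: z)
  have S2: "(\<Sum>i. cstar i x * poly ((pderiv ^^ i) ?y) x) = (\<Sum>i\<le>n. cstar i x * poly ((pderiv ^^ i) ?y) x)"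
    by (rule suminf_finite) (auto simp: z)
  show "(\<Sum>i. bstar i a x * poly ((pderiv ^^ i) ?y) x) + M * (\<Sum>i. cstar i x * poly ((pderiv ^^ i) ?y) x) = 0"
    unfolding S1 S2 bsum[OF deg] csum[OF deg] T_sob[OF assms(1,4)] Y0
    using final_identity[OF assms(1,4), of M N] by simp
qed

end
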